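(* Let $(\Omega,\mathcal{F})$ be a measurable space, $\mathcal{P}$ a nonempty set of probability measures on it, $\hat{\mathbb{E}}[Z]=\sup_{P\in\mathcal{P}}E_P[Z]$, and let $X,Y$ be random variables with $\hat{\mathbb{E}}[X^2]+\hat{\mathbb{E}}[Y^2]<\infty$. Put $U=\frac{X+Y}{2}$ and $V=\frac{X-Y}{2}$. Then $$\overline{C}(X,Y)=\max_{\beta\in\mathbb{R}}\min_{\alpha\in\mathbb{R}}\hat{\mathbb{E}}[(U-\alpha)^2-(V-\beta)^2],\qquad \underline{C}(X,Y)=\min_{\alpha\in\mathbb{R}}\max_{\beta\in\mathbb{R}}\left(-\hat{\mathbb{E}}[-(U-\alpha)^2+(V-\beta)^2]\right).$$ In particular, $\overline{C}(X,X)=\overline{V}(X)$ and $\underline{C}(X,X)=\underline{V}(X)$.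
   Context: For a random variable $W$ with $\hat{\mathbb{E}}[W^2]<\infty$: $\overline{\mu}_W=\hat{\mathbb{E}}[W]$, $\underline{\mu}_W=-\hat{\mathbb{E}}[-W]$, $M_W=[\underline{\mu}_W,\overline{\mu}_W]$. Upper variance $\overline{V}(W)=\min_{\mu\in M_W}\hat{\mathbb{E}}[(W-\mu)^2]$, lower variance $\underline{V}(W)=\min_{\mu\in M_W}\left(-\hat{\mathbb{E}}[-(W-\mu)^2]\right)$. Upper covariance $\overline{C}(X,Y)=\max_{\mu_2\in M_Y}\min_{\mu_1\in M_X}\hat{\mathbb{E}}[(X-\mu_1)(Y-\mu_2)]$; lower covariance $\underline{C}(X,Y)=\min_{\mu_2\in M_Y}\max_{\mu_1\in M_X}\left(-\hat{\mathbb{E}}[-(X-\mu_1)(Y-\mu_2)]\right)$. *)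

theory Defs
  imports "HOL-Probability.Probability"
begin

definition Ehat :: "'a measure set \<Rightarrow> ('a \<Rightarrow> real) \<Rightarrow> real" where
  "Ehat Ps Z = (SUP P\<in>Ps. integral\<^sup>L P Z)"

definition mu_up :: "'a measure set \<Rightarrow> ('a \<Rightarrow> real) \<Rightarrow> real" where
  "mu_up Ps W = Ehat Ps W"

definition mu_low :: "'a measure set \<Rightarrow> ('a \<Rightarrow> real) \<Rightarrow> real" where
  "mu_low Ps W = - Ehat Ps (\<lambda>\<omega>. - W \<omega>)"

definition MW :: "'a measure set \<Rightarrow> ('a \<Rightarrow> real) \<Rightarrow> real set" where
  "MW Ps W = {mu_low Ps W .. mu_up Ps W}"

definition upper_var :: "'a measure set \<Rightarrow> ('a \<Rightarrow> real) \<Rightarrow> real" where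
  "upper_var Ps W = (INF \<mu>\<in>MW Ps W. Ehat Ps (\<lambda>\<omega>. (W \<omega> - \<mu>)^2))"

definition lower_var :: "'a measure set \<Rightarrow> ('a \<Rightarrow> real) \<Rightarrow> real" where
  "lower_var Ps W = (INF \<mu>\<in>MW Ps W. - Ehat Ps (\<lambda>\<omega>. - ((W \<omega> - \<mu>)^2)))"

definition upper_cov :: "'a measure set \<Rightarrow> ('a \<Rightarrow> real) \<Rightarrow> ('a \<Rightarrow> real) \<Rightarrow> real" where
  "upper_cov Ps X Y = (SUP \<mu>2\<in>MW Ps Y. INF \<mu>1\<in>MW Ps X.
      Ehat Ps (\<lambda>\<omega>. (X \<omega> - \<mu>1) * (Y \<omega> - \<mu>2)))"

definition lower_cov :: "'a measure set \<Rightarrow> ('a \<Rightarrow> real) \<Rightarrow> ('a \<Rightarrow> real) \<Rightarrow> real" where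
  "lower_cov Ps X Y = (INF \<mu>2\<in>MW Ps Y. SUP \<mu>1\<in>MW Ps X.
      - Ehat Ps (\<lambda>\<omega>. - ((X \<omega> - \<mu>1) * (Y \<omega> - \<mu>2))))"

end

theory Submission
  imports Defs
begin

lemma sep_lemma:
  fixes p q d :: real
  assumes p: "0 \<le> p" and q: "0 \<le> q" and d: "0 \<le> d"
    and H: "\<And>l. 0 \<le> l \<Longrightarrow> l \<le> 1 \<Longrightarrow> l*(1-l)*d^2 \<le> l*p^2 + (1-l)*q^2"
  shows "d \<le> p + q"
proof (rule ccontr)
  assume "\<not> d \<le> p + q"
  hence dpq: "d > p + q" by simp
  define e where "e = (d - p - q)/2"
  have e: "e > 0" using dpq by (simp add: e_def)
  define A where "A = q + e"
  define B where "B = p + e"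
  have A: "A > 0" and B: "B > 0" using e p q by (auto simp: A_def B_def)
  have dAB: "d = A + B" by (simp add: A_def B_def e_def)
  have "A/d*(1-A/d)*d^2 \<le> A/d*p^2 + (1-A/d)*q^2"
    using H[of "A/d"] A B dAB by (simp add: field_simps)
  moreover have "1 - A/d = B/d" using dAB A B by (simp add: field_simps)
  ultimately have "A/d*(B/d)*d^2 \<le> A/d*p^2 + (B/d)*q^2" by simp
  moreover have "A/d*(B/d)*d^2 = A*B" using A B dpq p q by (simp add: field_simps power2_eq_square)
  moreover have "A/d*p^2 + (B/d)*q^2 = (A*p^2 + B*q^2)/d" by (simp add: add_divide_distrib)
  ultimately have "A*B \<le> (A*p^2 + B*q^2)/d" by simp
  hence "A*B*d \<le> A*p^2 + B*q^2" using A B dAB by (simp add: pos_le_divide_eq)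
  moreover have "p^2 < B^2" using p B_def e by (simp add: power_strict_mono)
  moreover have "q^2 < A^2" using q A_def e by (simp add: power_strict_mono)
  ultimately have "A*B*d < A*B^2 + B*A^2"
    using A B by (smt (verit) mult_strict_left_mono)
  thus False using dAB by (simp add: power2_eq_square algebra_simps)
qed

lemma coerc_lemma:
  fixes r K D :: real
  assumes "0 \<le> K" "0 \<le> D" "r > 2*K + 1 + D"
  shows "r^2 - 2*r*K \<ge> D"
proof -
  have "r^2 - 2*r*K = r*(r - 2*K)" by (simp add: power2_eq_square algebra_simps)
  also have "\<dots> \<ge> r*1" using assms by (intro mult_left_mono) auto
  finally show ?thesis using assms by simp
qed

lemma attain_max:
  fixes g :: "real \<Rightarrow> real"
  assumes R: "0 \<le> R" and L: "0 \<le> L"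
    and lip: "\<And>s t. \<bar>s\<bar> \<le> R \<Longrightarrow> \<bar>t\<bar> \<le> R \<Longrightarrow> g s \<le> g t + L*\<bar>s - t\<bar>"
    and out: "\<And>t. R < \<bar>t\<bar> \<Longrightarrow> g t \<le> g 0"
  shows "\<exists>t0. \<forall>t. g t \<le> g t0"
proof -
  have "lipschitz_on L {-R..R} g"
    unfolding lipschitz_on_def dist_real_def
  proof (intro conjI ballI L)
    fix s t assume "s \<in> {-R..R}" "t \<in> {-R..R}"
    hence "\<bar>s\<bar> \<le> R" "\<bar>t\<bar> \<le> R" by auto
    from lip[OF this] lip[OF this(2,1)] show "\<bar>g s - g t\<bar> \<le> L * \<bar>s - t\<bar>"
      by (simp add: abs_minus_commute)
  qed
  hence "continuous_on {-R..R} g" by (rule lipschitz_on_continuous_on)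
  then obtain t0 where t0: "t0 \<in> {-R..R}" "\<forall>y\<in>{-R..R}. g y \<le> g t0"
    using continuous_attains_sup[of "{-R..R}" g] R by auto
  have "g t \<le> g t0" for t
  proof (cases "\<bar>t\<bar> \<le> R")
    case True thus ?thesis using t0 by (auto simp: abs_le_iff)
  next
    case False
    hence "g t \<le> g 0" using out by simp
    also have "g 0 \<le> g t0" using t0 R by auto
    finally show ?thesis .
  qed
  thus ?thesis by blast
qed

lemma attain_min:
  fixes g :: "real \<Rightarrow> real"
  assumes R: "0 \<le> R" and L: "0 \<le> L"
    and lip: "\<And>s t. \<bar>s\<bar> \<le> R \<Longrightarrow> \<bar>t\<bar> \<le> R \<Longrightarrow> g s \<le> g t + L*\<bar>s - t\<bar>"
    and out: "\<And>t. R < \<bar>t\<bar> \<Longrightarrow> g 0 \<le> g t"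
  shows "\<exists>t0. \<forall>t. g t0 \<le> g t"
proof -
  have "\<exists>t0. \<forall>t. - g t \<le> - g t0"
  proof (rule attain_max[OF R L])
    fix s t :: real assume "\<bar>s\<bar> \<le> R" "\<bar>t\<bar> \<le> R"
    from lip[OF this(2,1)] show "- g s \<le> - g t + L * \<bar>s - t\<bar>"
      by (simp add: abs_minus_commute)
  next
    fix t :: real assume "R < \<bar>t\<bar>" thus "- g t \<le> - g 0" using out by simp
  qed
  thus ?thesis by auto
qed

lemma clamp_sq:
  fixes lo hi z t :: real
  assumes "lo \<le> z" "z \<le> hi"
  shows "(max lo (min hi t) - z)^2 \<le> (t - z)^2"
proof -
  have "\<bar>max lo (min hi t) - z\<bar> \<le> \<bar>t - z\<bar>" using assms by (auto simp: abs_if)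
  thus ?thesis by (simp add: abs_le_square_iff)
qed

locale core =
  fixes I :: "'i set" and a b uu vv :: "'i \<Rightarrow> real" and K :: real
  assumes ne: "I \<noteq> {}"
    and ba: "\<And>i. i \<in> I \<Longrightarrow> \<bar>a i\<bar> \<le> K"
    and bb: "\<And>i. i \<in> I \<Longrightarrow> \<bar>b i\<bar> \<le> K"
    and buu: "\<And>i. i \<in> I \<Longrightarrow> uu i \<le> K"
    and bvv: "\<And>i. i \<in> I \<Longrightarrow> vv i \<le> K"
    and uu0: "\<And>i. i \<in> I \<Longrightarrow> 0 \<le> uu i"
    and vv0: "\<And>i. i \<in> I \<Longrightarrow> 0 \<le> vv i"
begin

definition f where "f i \<alpha> \<beta> = uu i - 2*\<alpha>*a i + \<alpha>^2 - (vv i - 2*\<beta>*b i + \<beta>^2)"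
definition F where "F \<alpha> \<beta> = (SUP i\<in>I. f i \<alpha> \<beta>)"
definition x where "x i = a i + b i"
definition y where "y i = a i - b i"
definition c where "c i = uu i - (a i)^2 - vv i + (b i)^2"

lemma K0: "0 \<le> K"
proof -
  obtain i where "i \<in> I" using ne by blast
  thus ?thesis using ba[of i] by linarith
qed

lemma f_alt: "f i \<alpha> \<beta> = c i + (\<alpha> - a i)^2 - (\<beta> - b i)^2"
  by (simp add: f_def c_def power2_eq_square algebra_simps)

lemma f_gc: "f i ((m1+m2)/2) ((m1-m2)/2) = c i + (m1 - x i)*(m2 - y i)"
  by (simp add: f_def c_def x_def y_def power2_eq_square field_simps)

lemma absmul: "\<bar>s::real\<bar> \<le> K' \<Longrightarrow> \<bar>t * s\<bar> \<le> \<bar>t\<bar> * K'"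
  unfolding abs_mult by (rule mult_left_mono) simp_all

lemma f_eq: "f i \<alpha> \<beta> = uu i - 2*(\<alpha>*a i) + \<alpha>^2 - (vv i - 2*(\<beta>*b i) + \<beta>^2)"
  unfolding f_def by (simp add: mult.assoc)

lemma f_upper: "i \<in> I \<Longrightarrow> f i \<alpha> \<beta> \<le> K + 2*\<bar>\<alpha>\<bar>*K + \<alpha>^2 + 2*\<bar>\<beta>\<bar>*K - \<beta>^2"
proof -
  assume i: "i \<in> I"
  have "\<bar>\<alpha> * a i\<bar> \<le> \<bar>\<alpha>\<bar> * K" "\<bar>\<beta> * b i\<bar> \<le> \<bar>\<beta>\<bar> * K"
    using absmul ba[OF i] bb[OF i] by auto
  hence "- (\<alpha> * a i) \<le> \<bar>\<alpha>\<bar> * K" "\<beta> * b i \<le> \<bar>\<beta>\<bar> * K" by (auto dest: abs_le_D1 abs_le_D2)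
  thus ?thesis using buu[OF i] vv0[OF i] unfolding f_eq by linarith
qed

lemma f_lower: "i \<in> I \<Longrightarrow> f i \<alpha> \<beta> \<ge> \<alpha>^2 - 2*\<bar>\<alpha>\<bar>*K - (K + 2*\<bar>\<beta>\<bar>*K + \<beta>^2)"
proof -
  assume i: "i \<in> I"
  have "\<bar>\<alpha> * a i\<bar> \<le> \<bar>\<alpha>\<bar> * K" "\<bar>\<beta> * b i\<bar> \<le> \<bar>\<beta>\<bar> * K"
    using absmul ba[OF i] bb[OF i] by auto
  hence "\<alpha> * a i \<le> \<bar>\<alpha>\<bar> * K" "- (\<beta> * b i) \<le> \<bar>\<beta>\<bar> * K" by (auto dest: abs_le_D1 abs_le_D2)
  thus ?thesis using uu0[OF i] bvv[OF i] unfolding f_eq by linarith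
qed

lemma bdd_f: "bdd_above ((\<lambda>i. f i \<alpha> \<beta>) ` I)"
  using f_upper by (intro bdd_aboveI2) blast

lemma f_le_F: "i \<in> I \<Longrightarrow> f i \<alpha> \<beta> \<le> F \<alpha> \<beta>"
  unfolding F_def by (rule cSUP_upper[OF _ bdd_f])

lemma F_le: "(\<And>i. i \<in> I \<Longrightarrow> f i \<alpha> \<beta> \<le> C) \<Longrightarrow> F \<alpha> \<beta> \<le> C"
  unfolding F_def by (rule cSUP_least[OF ne])

lemma F_upper: "F \<alpha> \<beta> \<le> K + 2*\<bar>\<alpha>\<bar>*K + \<alpha>^2 + 2*\<bar>\<beta>\<bar>*K - \<beta>^2"
  by (rule F_le) (rule f_upper)

lemma some_i: obtains i where "i \<in> I" using ne by blast

lemma F_lower: "F \<alpha> \<beta> \<ge> \<alpha>^2 - 2*\<bar>\<alpha>\<bar>*K - (K + 2*\<bar>\<beta>\<bar>*K + \<beta>^2)"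
proof -
  obtain i where i: "i \<in> I" by (rule some_i)
  show ?thesis using f_lower[OF i, of \<alpha> \<beta>] f_le_F[OF i, of \<alpha> \<beta>] by linarith
qed

lemma c_bnd: "i \<in> I \<Longrightarrow> \<bar>c i\<bar> \<le> K + K^2"
proof -
  assume i: "i \<in> I"
  have "(a i)^2 \<le> K^2" "(b i)^2 \<le> K^2" using ba[OF i] bb[OF i] K0
    by (simp_all add: abs_le_square_iff[symmetric])
  moreover have "0 \<le> (a i)^2" "0 \<le> (b i)^2" "0 \<le> K^2" by simp_all
  ultimately have "c i \<le> K + K^2" "- (c i) \<le> K + K^2"
    using buu[OF i] bvv[OF i] uu0[OF i] vv0[OF i] unfolding c_def by linarith+
  thus ?thesis by linarith
qed

lemma x_bnd: "i \<in> I \<Longrightarrow> \<bar>x i\<bar> \<le> 2*K"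
  using ba[of i] bb[of i] abs_triangle_ineq[of "a i" "b i"] unfolding x_def by linarith
lemma y_bnd: "i \<in> I \<Longrightarrow> \<bar>y i\<bar> \<le> 2*K"
  using ba[of i] bb[of i] abs_triangle_ineq4[of "a i" "b i"] unfolding y_def by linarith

lemma F0_upper: "F 0 \<beta> \<le> K + 2*\<bar>\<beta>\<bar>*K - \<beta>^2"
  using F_upper[of 0 \<beta>] by simp

lemma F0_upper': "F 0 \<beta> \<le> K + 2*\<bar>\<beta>\<bar>*K"
  using F0_upper[of \<beta>] zero_le_power2[of \<beta>] by linarith

definition mix where "mix i j l = l*c i + (1-l)*c j + l*(1-l)*(x i - x j)*(y i - y j)"
definition PS where "PS = I \<times> I \<times> {0..1::real}"
definition mixp where "mixp p = mix (fst p) (fst (snd p)) (snd (snd p))"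
definition W where "W = (SUP p\<in>PS. mixp p)"

lemma A1:
  assumes i: "i \<in> I" and j: "j \<in> I" and l: "0 \<le> l" "l \<le> 1"
  shows "mix i j l \<le> F \<alpha> (l*b i + (1-l)*b j)"
proof -
  define \<beta> where "\<beta> = l*b i + (1-l)*b j"
  have id: "l * f i \<alpha> \<beta> + (1-l) * f j \<alpha> \<beta> = mix i j l + (\<alpha> - (l*a i + (1-l)*a j))^2"
    unfolding f_def mix_def c_def x_def y_def \<beta>_def by (simp add: power2_eq_square algebra_simps)
  have "l * f i \<alpha> \<beta> \<le> l * F \<alpha> \<beta>" using l f_le_F[OF i] by (simp add: mult_left_mono)
  moreover have "(1-l) * f j \<alpha> \<beta> \<le> (1-l) * F \<alpha> \<beta>" using l f_le_F[OF j] by (simp add: mult_left_mono)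
  ultimately have "mix i j l + (\<alpha> - (l*a i + (1-l)*a j))^2 \<le> F \<alpha> \<beta>"
    using id by (simp add: algebra_simps)
  moreover have "(\<alpha> - (l*a i + (1-l)*a j))^2 \<ge> 0" by simp
  ultimately show ?thesis unfolding \<beta>_def by linarith
qed

lemma mix_id:
  assumes "m2 = l*y i + (1-l)*y j"
  shows "l*(c i + (t - x i)*(m2 - y i)) + (1-l)*(c j + (t - x j)*(m2 - y j)) = mix i j l"
  unfolding mix_def assms by (simp add: power2_eq_square algebra_simps)

lemma A2:
  assumes i: "i \<in> I" and j: "j \<in> I" and l: "0 \<le> l" "l \<le> 1"
    and m2: "m2 = l*y i + (1-l)*y j"
  shows "mix i j l \<le> F ((m1+m2)/2) ((m1-m2)/2)"
proof -
  have "l * f i ((m1+m2)/2) ((m1-m2)/2) \<le> l * F ((m1+m2)/2) ((m1-m2)/2)"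
    using l f_le_F[OF i] by (simp add: mult_left_mono)
  moreover have "(1-l) * f j ((m1+m2)/2) ((m1-m2)/2) \<le> (1-l) * F ((m1+m2)/2) ((m1-m2)/2)"
    using l f_le_F[OF j] by (simp add: mult_left_mono)
  ultimately show ?thesis using mix_id[OF m2, of m1] unfolding f_gc by (simp add: algebra_simps)
qed

lemma bmix: "i \<in> I \<Longrightarrow> j \<in> I \<Longrightarrow> 0 \<le> l \<Longrightarrow> l \<le> 1 \<Longrightarrow> \<bar>l*b i + (1-l)*b j\<bar> \<le> K"
proof -
  assume i: "i \<in> I" and j: "j \<in> I" and l: "0 \<le> l" "l \<le> 1"
  have "\<bar>l*b i\<bar> \<le> l*K" using bb[OF i] l by (simp add: abs_mult mult_left_mono)
  moreover have "\<bar>(1-l)*b j\<bar> \<le> (1-l)*K" using bb[OF j] l by (simp add: abs_mult mult_left_mono)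
  moreover have "(1-l)*K = K - l*K" by (simp add: algebra_simps)
  ultimately show ?thesis using abs_triangle_ineq[of "l*b i" "(1-l)*b j"] by linarith
qed

lemma PS_ne: "PS \<noteq> {}" using ne unfolding PS_def by auto

lemma mix_bnd: "p \<in> PS \<Longrightarrow> mixp p \<le> K + 2*K*K"
proof -
  assume "p \<in> PS"
  then obtain i j l where p: "p = (i,j,l)" "i \<in> I" "j \<in> I" "0 \<le> l" "l \<le> 1"
    unfolding PS_def by auto
  have "mixp p \<le> F 0 (l*b i + (1-l)*b j)" using A1[OF p(2-5)] p(1) by (simp add: mixp_def)
  also have "\<dots> \<le> K + 2*\<bar>l*b i + (1-l)*b j\<bar>*K" by (rule F0_upper')
  also have "\<dots> \<le> K + 2*K*K" using bmix[OF p(2-5)] K0 by (simp add: mult_right_mono)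
  finally show ?thesis .
qed

lemma bdd_mix: "bdd_above (mixp ` PS)"
  using mix_bnd by (intro bdd_aboveI2) blast

lemma le_W: "p \<in> PS \<Longrightarrow> mixp p \<le> W"
  unfolding W_def by (rule cSUP_upper[OF _ bdd_mix])

lemma c_le_W: "i \<in> I \<Longrightarrow> c i \<le> W"
  using le_W[of "(i,i,1)"] by (simp add: PS_def mixp_def mix_def)

lemma mix_le_W: "i \<in> I \<Longrightarrow> j \<in> I \<Longrightarrow> 0 \<le> l \<Longrightarrow> l \<le> 1 \<Longrightarrow> mix i j l \<le> W"
  using le_W[of "(i,j,l)"] by (simp add: PS_def mixp_def)

end

context core
begin

lemma B1: "\<exists>\<alpha>. F \<alpha> \<beta> \<le> W"
proof -
  define \<rho> where "\<rho> i = W - c i + (\<beta> - b i)^2" for i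
  define p where "p i = sqrt (\<rho> i)" for i
  have \<rho>0: "0 \<le> \<rho> i" if "i \<in> I" for i
    using c_le_W[OF that] zero_le_power2[of "\<beta> - b i"] unfolding \<rho>_def by linarith
  have p0: "0 \<le> p i" if "i \<in> I" for i unfolding p_def using \<rho>0[OF that] by simp
  have pp: "(p i)^2 = \<rho> i" if "i \<in> I" for i unfolding p_def using \<rho>0[OF that] by simp
  have pair: "a i - p i \<le> a j + p j" if i: "i \<in> I" and j: "j \<in> I" for i j
  proof -
    have key: "l*(1-l)*\<bar>a i - a j\<bar>^2 \<le> l*(p i)^2 + (1-l)*(p j)^2" if l: "0 \<le> l" "l \<le> 1" for l
    proof -
      have id: "l*\<rho> i + (1-l)*\<rho> j - l*(1-l)*(a i - a j)^2
          = (W - mix i j l) + (\<beta> - (l*b i + (1-l)*b j))^2"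
        unfolding \<rho>_def mix_def x_def y_def by (simp add: power2_eq_square algebra_simps)
      have "mix i j l \<le> W" by (rule mix_le_W[OF i j l])
      hence "l*(1-l)*(a i - a j)^2 \<le> l*\<rho> i + (1-l)*\<rho> j"
        using id zero_le_power2[of "\<beta> - (l*b i + (1-l)*b j)"] by linarith
      thus ?thesis using pp[OF i] pp[OF j] by simp
    qed
    have "\<bar>a i - a j\<bar> \<le> p i + p j"
      by (rule sep_lemma[OF p0[OF i] p0[OF j] abs_ge_zero key])
    thus ?thesis by linarith
  qed
  define t where "t = (SUP i\<in>I. a i - p i)"
  have bddt: "bdd_above ((\<lambda>i. a i - p i) ` I)"
  proof (rule bdd_aboveI2)
    fix i assume "i \<in> I" thus "a i - p i \<le> K" using ba[of i] p0[of i] by linarith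
  qed
  have t1: "a j - p j \<le> t" if "j \<in> I" for j unfolding t_def by (rule cSUP_upper[OF that bddt])
  have t2: "t \<le> a j + p j" if "j \<in> I" for j unfolding t_def
    by (rule cSUP_least[OF ne]) (rule pair[OF _ that])
  have "F t \<beta> \<le> W"
  proof (rule F_le)
    fix j assume j: "j \<in> I"
    have "\<bar>t - a j\<bar> \<le> p j" using t1[OF j] t2[OF j] by linarith
    hence "(t - a j)^2 \<le> (p j)^2" using p0[OF j] by (simp add: abs_le_square_iff[symmetric])
    hence "(t - a j)^2 \<le> \<rho> j" using pp[OF j] by simp
    thus "f j t \<beta> \<le> W" unfolding f_alt \<rho>_def by linarith
  qed
  thus ?thesis by blast
qed

definition xl where "xl = (INF i\<in>I. x i)"
definition xu where "xu = (SUP i\<in>I. x i)"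
definition yl where "yl = (INF i\<in>I. y i)"
definition yu where "yu = (SUP i\<in>I. y i)"

lemma x_b2: "i \<in> I \<Longrightarrow> x i \<le> 2*K \<and> -(2*K) \<le> x i" using x_bnd[of i] by linarith
lemma y_b2: "i \<in> I \<Longrightarrow> y i \<le> 2*K \<and> -(2*K) \<le> y i" using y_bnd[of i] by linarith

lemma bdd_x: "bdd_above (x ` I)" "bdd_below (x ` I)"
  using x_b2 by (auto intro!: bdd_aboveI2[where M="2*K"] bdd_belowI2[where m="-(2*K)"])
  
lemma bdd_y: "bdd_above (y ` I)" "bdd_below (y ` I)"
  using y_b2 by (auto intro!: bdd_aboveI2[where M="2*K"] bdd_belowI2[where m="-(2*K)"])

lemma x_in: "i \<in> I \<Longrightarrow> xl \<le> x i \<and> x i \<le> xu"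
  unfolding xl_def xu_def using bdd_x by (auto intro: cINF_lower cSUP_upper)

lemma y_in: "i \<in> I \<Longrightarrow> yl \<le> y i \<and> y i \<le> yu"
  unfolding yl_def yu_def using bdd_y by (auto intro: cINF_lower cSUP_upper)

lemma xl_xu: "xl \<le> xu" using x_in some_i by (metis order.trans)
lemma yl_yu: "yl \<le> yu" using y_in some_i by (metis order.trans)

lemma B2: "\<exists>m1\<in>{xl..xu}. F ((m1+m2)/2) ((m1-m2)/2) \<le> W"
proof -
  define s where "s i = m2 - y i" for i
  define g where "g i t = c i + (t - x i) * s i" for i t
  have fg: "f i ((t+m2)/2) ((t-m2)/2) = g i t" for i t unfolding f_gc g_def s_def ..
  define J where "J = {i\<in>I. s i < 0}"
  define q where "q i = x i + (W - c i)/s i" for i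
  define S where "S = insert xl (q ` J)"
  define t where "t = Sup S"
  have qx: "q i \<le> x i" if "i \<in> J" for i
  proof -
    have "0 \<le> W - c i" "s i < 0" using c_le_W[of i] that unfolding J_def by auto
    hence "(W - c i)/s i \<le> 0" by (simp add: divide_nonneg_neg)
    thus ?thesis unfolding q_def by simp
  qed
  have Sb: "\<forall>z\<in>S. z \<le> xu"
    unfolding S_def using xl_xu qx x_in J_def by (auto intro: order.trans)
  have bddS: "bdd_above S" using Sb by (auto simp: bdd_above_def)
  have tl: "xl \<le> t" unfolding t_def by (rule cSup_upper[OF _ bddS]) (simp add: S_def)
  have tu: "t \<le> xu" unfolding t_def by (rule cSup_least) (use Sb S_def in auto)
  have qt: "q j \<le> t" if "j \<in> J" for j unfolding t_def
    by (rule cSup_upper[OF _ bddS]) (use that S_def in auto)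
  have "\<forall>i\<in>I. g i t \<le> W"
  proof
    fix i assume i: "i \<in> I"
    consider "s i = 0" | "s i < 0" | "s i > 0" by linarith
    thus "g i t \<le> W"
    proof cases
      case 1 thus ?thesis using c_le_W[OF i] unfolding g_def by simp
    next
      case 2
      hence iJ: "i \<in> J" using i J_def by auto
      have "(t - x i) * s i \<le> (q i - x i) * s i"
        using qt[OF iJ] 2 by (intro mult_right_mono_neg) auto
      also have "(q i - x i) * s i = W - c i" using 2 unfolding q_def by simp
      finally show ?thesis unfolding g_def by simp
    next
      case 3
      define r where "r = x i + (W - c i)/s i"
      have gr: "g i r = W" using 3 unfolding g_def r_def by simp
      have "t \<le> r" unfolding t_def
      proof (rule cSup_least)
        show "S \<noteq> {}" unfolding S_def by simp
      next
        fix z assume "z \<in> S"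
        then consider "z = xl" | j where "j \<in> J" "z = q j" unfolding S_def by auto
        thus "z \<le> r"
        proof cases
          case 1
          have "0 \<le> (W - c i)/s i" using c_le_W[OF i] 3 by simp
          thus ?thesis using 1 x_in[OF i] unfolding r_def by linarith
        next
          case (2 j)
          have j: "j \<in> I" and sj: "s j < 0" using 2 J_def by auto
          define l where "l = - s j / (s i - s j)"
          have den: "s i - s j > 0" using 3 sj by simp
          have l0: "0 < l" and l1: "l < 1" using den 3 sj unfolding l_def by (simp_all add: field_simps)
          have m2: "m2 = l*y i + (1-l)*y j"
          proof -
            have "l*y i + (1-l)*y j = y j + l*(y i - y j)" by (simp add: algebra_simps)
            also have "y i - y j = s j - s i" unfolding s_def by simp
            also have "l*(s j - s i) = s j" using den unfolding l_def by (simp add: field_simps)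
            finally show ?thesis unfolding s_def by simp
          qed
          have "l * g i r + (1-l) * g j r = mix i j l"
            using mix_id[OF m2, of r] unfolding g_def s_def .
          also have "\<dots> \<le> W" using mix_le_W[OF i j] l0 l1 by simp
          finally have "(1-l) * g j r \<le> (1-l) * W" using gr by (simp add: algebra_simps)
          hence "g j r \<le> W" using l1 by simp
          hence "(r - x j) * s j \<le> W - c j" unfolding g_def by simp
          hence "(W - c j)/s j \<le> r - x j" using sj by (simp add: neg_divide_le_eq)
          thus ?thesis using 2 unfolding q_def by linarith
        qed
      qed
      hence "(t - x i) * s i \<le> (r - x i) * s i" using 3 by (intro mult_right_mono) auto
      thus ?thesis using gr unfolding g_def by simp
    qed
  qed
  hence "F ((t+m2)/2) ((t-m2)/2) \<le> W" by (intro F_le) (simp add: fg)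
  thus ?thesis using tl tu by auto
qed

end

context core
begin

lemma bddF_a: "bdd_below (range (\<lambda>\<alpha>. F \<alpha> \<beta>))"
proof -
  obtain i where i: "i \<in> I" by (rule some_i)
  have "c i - (\<beta> - b i)^2 \<le> F \<alpha> \<beta>" for \<alpha>
    using f_le_F[OF i, of \<alpha> \<beta>] zero_le_power2[of "\<alpha> - a i"] unfolding f_alt by linarith
  thus ?thesis by (intro bdd_belowI2) 
qed

lemma k_le_F: "(INF \<alpha>. F \<alpha> \<beta>) \<le> F \<alpha> \<beta>"
  by (rule cINF_lower[OF bddF_a UNIV_I])

lemma k_le_W: "(INF \<alpha>. F \<alpha> \<beta>) \<le> W"
proof -
  obtain \<alpha> where "F \<alpha> \<beta> \<le> W" using B1 by blast
  thus ?thesis using k_le_F[of \<beta> \<alpha>] by linarith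
qed

lemma bdd_k: "bdd_above (range (\<lambda>\<beta>. INF \<alpha>. F \<alpha> \<beta>))"
  using k_le_W by (intro bdd_aboveI2) 

lemma SUP_k: "(SUP \<beta>. INF \<alpha>. F \<alpha> \<beta>) = W"
proof (rule antisym)
  show "(SUP \<beta>. INF \<alpha>. F \<alpha> \<beta>) \<le> W" by (rule cSUP_least) (auto simp: k_le_W)
  show "W \<le> (SUP \<beta>. INF \<alpha>. F \<alpha> \<beta>)" unfolding W_def
  proof (rule cSUP_least[OF PS_ne])
    fix p assume "p \<in> PS"
    then obtain i j l where p: "p = (i,j,l)" "i \<in> I" "j \<in> I" "0 \<le> l" "l \<le> 1"
      unfolding PS_def by auto
    define \<beta> where "\<beta> = l*b i + (1-l)*b j"
    have "mixp p \<le> (INF \<alpha>. F \<alpha> \<beta>)"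
      by (rule cINF_greatest) (use A1[OF p(2-5)] p(1) in \<open>auto simp: mixp_def \<beta>_def\<close>)
    also have "\<dots> \<le> (SUP \<beta>. INF \<alpha>. F \<alpha> \<beta>)" by (rule cSUP_upper[OF UNIV_I bdd_k])
    finally show "mixp p \<le> (SUP \<beta>. INF \<alpha>. F \<alpha> \<beta>)" .
  qed
qed

lemma bddF_h: "bdd_below ((\<lambda>m1. F ((m1+m2)/2) ((m1-m2)/2)) ` {xl..xu})"
proof -
  obtain i where i: "i \<in> I" by (rule some_i)
  have "c i - (xu - xl)*\<bar>m2 - y i\<bar> \<le> F ((m1+m2)/2) ((m1-m2)/2)" if m1: "m1 \<in> {xl..xu}" for m1
  proof -
    have "\<bar>m1 - x i\<bar> \<le> xu - xl" using m1 x_in[OF i] by auto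
    hence "\<bar>m1 - x i\<bar> * \<bar>m2 - y i\<bar> \<le> (xu - xl) * \<bar>m2 - y i\<bar>" by (rule mult_right_mono) simp
    hence "- ((xu - xl) * \<bar>m2 - y i\<bar>) \<le> (m1 - x i) * (m2 - y i)"
      using abs_ge_minus_self[of "(m1 - x i) * (m2 - y i)"] unfolding abs_mult by linarith
    thus ?thesis using f_le_F[OF i, of "(m1+m2)/2" "(m1-m2)/2"] unfolding f_gc by linarith
  qed
  thus ?thesis by (intro bdd_belowI2) 
qed

lemma h_le_W: "(INF m1\<in>{xl..xu}. F ((m1+m2)/2) ((m1-m2)/2)) \<le> W"
proof -
  obtain m1 where "m1 \<in> {xl..xu}" "F ((m1+m2)/2) ((m1-m2)/2) \<le> W" using B2 by blast
  thus ?thesis by (intro cINF_lower2[OF bddF_h])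
qed

lemma bdd_h: "bdd_above ((\<lambda>m2. INF m1\<in>{xl..xu}. F ((m1+m2)/2) ((m1-m2)/2)) ` A)"
  using h_le_W by (intro bdd_aboveI2) 

lemma SUP_h: "(SUP m2\<in>{yl..yu}. INF m1\<in>{xl..xu}. F ((m1+m2)/2) ((m1-m2)/2)) = W"
proof (rule antisym)
  show "(SUP m2\<in>{yl..yu}. INF m1\<in>{xl..xu}. F ((m1+m2)/2) ((m1-m2)/2)) \<le> W"
    by (rule cSUP_least) (use yl_yu h_le_W in auto)
  show "W \<le> (SUP m2\<in>{yl..yu}. INF m1\<in>{xl..xu}. F ((m1+m2)/2) ((m1-m2)/2))" unfolding W_def
  proof (rule cSUP_least[OF PS_ne])
    fix p assume "p \<in> PS"
    then obtain i j l where p: "p = (i,j,l)" "i \<in> I" "j \<in> I" "0 \<le> l" "l \<le> 1"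
      unfolding PS_def by auto
    define m2 where "m2 = l*y i + (1-l)*y j"
    have "l*yl \<le> l*y i" "(1-l)*yl \<le> (1-l)*y j" "l*y i \<le> l*yu" "(1-l)*y j \<le> (1-l)*yu"
      using y_in[OF p(2)] y_in[OF p(3)] p(4,5) by (auto intro: mult_left_mono)
    moreover have "l*yl + (1-l)*yl = yl" "l*yu + (1-l)*yu = yu" by (simp_all add: algebra_simps)
    ultimately have m2in: "m2 \<in> {yl..yu}" unfolding m2_def by auto
    have "mixp p \<le> (INF m1\<in>{xl..xu}. F ((m1+m2)/2) ((m1-m2)/2))"
      by (rule cINF_greatest) (use xl_xu A2[OF p(2-5) m2_def] p(1) in \<open>auto simp: mixp_def\<close>)
    also have "\<dots> \<le> (SUP m2\<in>{yl..yu}. INF m1\<in>{xl..xu}. F ((m1+m2)/2) ((m1-m2)/2))"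
      by (rule cSUP_upper[OF m2in bdd_h])
    finally show "mixp p \<le> (SUP m2\<in>{yl..yu}. INF m1\<in>{xl..xu}. F ((m1+m2)/2) ((m1-m2)/2))" .
  qed
qed

theorem claim3: "(SUP m2\<in>{yl..yu}. INF m1\<in>{xl..xu}. F ((m1+m2)/2) ((m1-m2)/2)) = (SUP \<beta>. INF \<alpha>. F \<alpha> \<beta>)"
  using SUP_h SUP_k by simp

lemma absprod: "\<bar>u::real\<bar> \<le> B \<Longrightarrow> s * u \<le> \<bar>s\<bar> * B"
proof -
  assume "\<bar>u\<bar> \<le> B"
  hence "\<bar>s * u\<bar> \<le> \<bar>s\<bar> * B" by (rule absmul)
  thus ?thesis by linarith
qed

theorem claim1: "\<exists>\<alpha>0. \<forall>\<alpha>. F \<alpha>0 \<beta> \<le> F \<alpha> \<beta>"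
proof -
  define D where "D = 2*K + 4*\<bar>\<beta>\<bar>*K + \<beta>^2"
  define R where "R = 2*K + 1 + D"
  have D0: "0 \<le> D" unfolding D_def using K0 by simp
  have R0: "0 \<le> R" unfolding R_def using K0 D0 by simp
  show ?thesis
  proof (rule attain_min[OF R0, of "2*R + 2*K"])
    show "0 \<le> 2*R + 2*K" using R0 K0 by simp
  next
    fix s t :: real assume s: "\<bar>s\<bar> \<le> R" and t: "\<bar>t\<bar> \<le> R"
    show "F s \<beta> \<le> F t \<beta> + (2*R + 2*K) * \<bar>s - t\<bar>"
    proof (rule F_le)
      fix i assume i: "i \<in> I"
      have id: "f i s \<beta> = f i t \<beta> + (s - t) * (s + t - 2 * a i)"
        unfolding f_def by (simp add: power2_eq_square algebra_simps)
      have "\<bar>s + t - 2 * a i\<bar> \<le> 2*R + 2*K" using s t ba[OF i] by linarith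
      hence "(s - t) * (s + t - 2 * a i) \<le> \<bar>s - t\<bar> * (2*R + 2*K)" by (rule absprod)
      thus "f i s \<beta> \<le> F t \<beta> + (2*R + 2*K) * \<bar>s - t\<bar>"
        using id f_le_F[OF i, of t \<beta>] by (simp add: mult.commute)
    qed
  next
    fix t :: real assume t: "R < \<bar>t\<bar>"
    have "D \<le> \<bar>t\<bar>^2 - 2*\<bar>t\<bar>*K" using coerc_lemma[OF K0 D0, of "\<bar>t\<bar>"] t unfolding R_def by linarith
    hence "D \<le> t^2 - 2*\<bar>t\<bar>*K" by simp
    thus "F 0 \<beta> \<le> F t \<beta>" using F_lower[of t \<beta>] F0_upper'[of \<beta>] unfolding D_def by linarith
  qed
qed

lemma k0_lower: "-(K + 2*K^2) \<le> (INF \<alpha>. F \<alpha> 0)"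
proof (rule cINF_greatest)
  fix \<alpha> :: real
  obtain i where i: "i \<in> I" by (rule some_i)
  have "(b i)^2 \<le> K^2" using bb[OF i] K0 by (simp add: abs_le_square_iff[symmetric])
  moreover have "-(K + K^2) \<le> c i" using c_bnd[OF i] by linarith
  moreover have "(0 - b i)^2 = (b i)^2" by (simp add: power2_eq_square)
  ultimately show "-(K + 2*K^2) \<le> F \<alpha> 0"
    using f_le_F[OF i, of \<alpha> 0] zero_le_power2[of "\<alpha> - a i"] unfolding f_alt by linarith
qed simp

theorem claim2: "\<exists>\<beta>0. \<forall>\<beta>. (INF \<alpha>. F \<alpha> \<beta>) \<le> (INF \<alpha>. F \<alpha> \<beta>0)"
proof -
  define D where "D = 2*K + 2*K^2"
  define R where "R = 2*K + 1 + D"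
  have D0: "0 \<le> D" unfolding D_def using K0 by simp
  have R0: "0 \<le> R" unfolding R_def using K0 D0 by simp
  show ?thesis
  proof (rule attain_max[OF R0, of "2*K + 2*R"])
    show "0 \<le> 2*K + 2*R" using R0 K0 by simp
  next
    fix s t :: real assume s: "\<bar>s\<bar> \<le> R" and t: "\<bar>t\<bar> \<le> R"
    have Fl: "F \<alpha> s \<le> F \<alpha> t + (2*K + 2*R) * \<bar>s - t\<bar>" for \<alpha>
    proof (rule F_le)
      fix i assume i: "i \<in> I"
      have id: "f i \<alpha> s = f i \<alpha> t + (s - t) * (2 * b i - s - t)"
        unfolding f_def by (simp add: power2_eq_square algebra_simps)
      have "\<bar>2 * b i - s - t\<bar> \<le> 2*K + 2*R" using s t bb[OF i] by linarith
      hence "(s - t) * (2 * b i - s - t) \<le> \<bar>s - t\<bar> * (2*K + 2*R)" by (rule absprod)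
      thus "f i \<alpha> s \<le> F \<alpha> t + (2*K + 2*R) * \<bar>s - t\<bar>"
        using id f_le_F[OF i, of \<alpha> t] by (simp add: mult.commute)
    qed
    have "(INF \<alpha>. F \<alpha> s) - (2*K + 2*R) * \<bar>s - t\<bar> \<le> (INF \<alpha>. F \<alpha> t)"
    proof (rule cINF_greatest)
      fix \<alpha> show "(INF \<alpha>. F \<alpha> s) - (2*K + 2*R) * \<bar>s - t\<bar> \<le> F \<alpha> t"
        using k_le_F[of s \<alpha>] Fl[of \<alpha>] by linarith
    qed simp
    thus "(INF \<alpha>. F \<alpha> s) \<le> (INF \<alpha>. F \<alpha> t) + (2*K + 2*R) * \<bar>s - t\<bar>" by linarith
  next
    fix t :: real assume t: "R < \<bar>t\<bar>"
    have "D \<le> \<bar>t\<bar>^2 - 2*\<bar>t\<bar>*K" using coerc_lemma[OF K0 D0, of "\<bar>t\<bar>"] t unfolding R_def by linarith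
    hence "D \<le> t^2 - 2*\<bar>t\<bar>*K" by simp
    hence "F 0 t \<le> -(K + 2*K^2)" using F0_upper[of t] unfolding D_def by linarith
    thus "(INF \<alpha>. F \<alpha> t) \<le> (INF \<alpha>. F \<alpha> 0)" using k_le_F[of t 0] k0_lower by linarith
  qed
qed

end

context core
begin

theorem var_up:
  assumes bz: "\<And>i. i \<in> I \<Longrightarrow> b i = 0 \<and> vv i = 0"
  shows "(SUP \<beta>. INF \<alpha>. F \<alpha> \<beta>) = (INF \<alpha>\<in>{xl..xu}. F \<alpha> 0)"
proof -
  have Fb: "F \<alpha> \<beta> \<le> F \<alpha> 0" for \<alpha> \<beta>
  proof (rule F_le)
    fix i assume i: "i \<in> I"
    have "f i \<alpha> \<beta> = f i \<alpha> 0 - \<beta>^2" using bz[OF i] unfolding f_def by simp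
    thus "f i \<alpha> \<beta> \<le> F \<alpha> 0" using f_le_F[OF i, of \<alpha> 0] zero_le_power2[of \<beta>] by linarith
  qed
  have kk: "(INF \<alpha>. F \<alpha> \<beta>) \<le> (INF \<alpha>. F \<alpha> 0)" for \<beta>
  proof (rule cINF_greatest)
    fix \<alpha> show "(INF \<alpha>. F \<alpha> \<beta>) \<le> F \<alpha> 0" using k_le_F[of \<beta> \<alpha>] Fb[of \<alpha> \<beta>] by linarith
  qed simp
  have s1: "(SUP \<beta>. INF \<alpha>. F \<alpha> \<beta>) = (INF \<alpha>. F \<alpha> 0)"
  proof (rule antisym)
    show "(SUP \<beta>. INF \<alpha>. F \<alpha> \<beta>) \<le> (INF \<alpha>. F \<alpha> 0)" by (rule cSUP_least) (auto simp: kk)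
    show "(INF \<alpha>. F \<alpha> 0) \<le> (SUP \<beta>. INF \<alpha>. F \<alpha> \<beta>)" by (rule cSUP_upper[OF UNIV_I bdd_k])
  qed
  have bM: "bdd_below ((\<lambda>\<alpha>. F \<alpha> 0) ` {xl..xu})"
    by (rule bdd_below_mono[OF bddF_a]) auto
  have "(INF \<alpha>. F \<alpha> 0) = (INF \<alpha>\<in>{xl..xu}. F \<alpha> 0)"
  proof (rule antisym)
    show "(INF \<alpha>. F \<alpha> 0) \<le> (INF \<alpha>\<in>{xl..xu}. F \<alpha> 0)"
      by (rule cINF_greatest) (use xl_xu k_le_F in auto)
    show "(INF \<alpha>\<in>{xl..xu}. F \<alpha> 0) \<le> (INF \<alpha>. F \<alpha> 0)"
    proof (rule cINF_greatest)
      fix \<alpha> :: real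
      define \<alpha>' where "\<alpha>' = max xl (min xu \<alpha>)"
      have a'M: "\<alpha>' \<in> {xl..xu}" unfolding \<alpha>'_def using xl_xu by auto
      have "F \<alpha>' 0 \<le> F \<alpha> 0"
      proof (rule F_le)
        fix i assume i: "i \<in> I"
        have xa: "x i = a i" using bz[OF i] unfolding x_def by simp
        have "(\<alpha>' - a i)^2 \<le> (\<alpha> - a i)^2" unfolding \<alpha>'_def
          by (rule clamp_sq) (use x_in[OF i] xa in auto)
        hence "f i \<alpha>' 0 \<le> f i \<alpha> 0" unfolding f_alt by linarith
        thus "f i \<alpha>' 0 \<le> F \<alpha> 0" using f_le_F[OF i, of \<alpha> 0] by linarith
      qed
      moreover have "(INF \<alpha>\<in>{xl..xu}. F \<alpha> 0) \<le> F \<alpha>' 0" by (rule cINF_lower[OF bM a'M])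
      ultimately show "(INF \<alpha>\<in>{xl..xu}. F \<alpha> 0) \<le> F \<alpha> 0" by linarith
    qed simp
  qed
  thus ?thesis using s1 by simp
qed

theorem var_low:
  assumes az: "\<And>i. i \<in> I \<Longrightarrow> a i = 0 \<and> uu i = 0"
  shows "(SUP \<beta>. INF \<alpha>. F \<alpha> \<beta>) = (SUP \<beta>\<in>{xl..xu}. F 0 \<beta>)"
proof -
  have kF: "(INF \<alpha>. F \<alpha> \<beta>) = F 0 \<beta>" for \<beta>
  proof (rule antisym)
    show "(INF \<alpha>. F \<alpha> \<beta>) \<le> F 0 \<beta>" by (rule k_le_F)
    show "F 0 \<beta> \<le> (INF \<alpha>. F \<alpha> \<beta>)"
    proof (rule cINF_greatest)
      fix \<alpha> show "F 0 \<beta> \<le> F \<alpha> \<beta>"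
      proof (rule F_le)
        fix i assume i: "i \<in> I"
        have "f i \<alpha> \<beta> = f i 0 \<beta> + \<alpha>^2" using az[OF i] unfolding f_def by simp
        thus "f i 0 \<beta> \<le> F \<alpha> \<beta>" using f_le_F[OF i, of \<alpha> \<beta>] zero_le_power2[of \<alpha>] by linarith
      qed
    qed simp
  qed
  have bdd0: "bdd_above (range (\<lambda>\<beta>. F 0 \<beta>))" using bdd_k unfolding kF .
  have bM: "bdd_above ((\<lambda>\<beta>. F 0 \<beta>) ` {xl..xu})" by (rule bdd_above_mono[OF bdd0]) auto
  have "(SUP \<beta>. F 0 \<beta>) = (SUP \<beta>\<in>{xl..xu}. F 0 \<beta>)"
  proof (rule antisym)
    show "(SUP \<beta>\<in>{xl..xu}. F 0 \<beta>) \<le> (SUP \<beta>. F 0 \<beta>)"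
      by (rule cSUP_least) (use xl_xu cSUP_upper[OF UNIV_I bdd0] in auto)
    show "(SUP \<beta>. F 0 \<beta>) \<le> (SUP \<beta>\<in>{xl..xu}. F 0 \<beta>)"
    proof (rule cSUP_least)
      fix \<beta> :: real
      define \<beta>' where "\<beta>' = max xl (min xu \<beta>)"
      have b'M: "\<beta>' \<in> {xl..xu}" unfolding \<beta>'_def using xl_xu by auto
      have "F 0 \<beta> \<le> F 0 \<beta>'"
      proof (rule F_le)
        fix i assume i: "i \<in> I"
        have xb: "x i = b i" using az[OF i] unfolding x_def by simp
        have "(\<beta>' - b i)^2 \<le> (\<beta> - b i)^2" unfolding \<beta>'_def
          by (rule clamp_sq) (use x_in[OF i] xb in auto)
        hence "f i 0 \<beta> \<le> f i 0 \<beta>'" unfolding f_alt by linarith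
        thus "f i 0 \<beta> \<le> F 0 \<beta>'" using f_le_F[OF i, of 0 \<beta>'] by linarith
      qed
      moreover have "F 0 \<beta>' \<le> (SUP \<beta>\<in>{xl..xu}. F 0 \<beta>)" by (rule cSUP_upper[OF b'M bM])
      ultimately show "F 0 \<beta> \<le> (SUP \<beta>\<in>{xl..xu}. F 0 \<beta>)" by linarith
    qed simp
  qed
  thus ?thesis unfolding kF .
qed

end

lemma absprod_sq: "\<bar>u * v\<bar> \<le> (u::real)^2 + v^2"
proof -
  have "0 \<le> (\<bar>u\<bar> - \<bar>v\<bar>)^2" by simp
  hence "2*(\<bar>u\<bar>*\<bar>v\<bar>) \<le> u^2 + v^2" by (simp add: power2_eq_square algebra_simps)
  moreover have "0 \<le> \<bar>u\<bar>*\<bar>v\<bar>" by simp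
  ultimately show ?thesis unfolding abs_mult by linarith
qed

lemma abs_le_1sq: "\<bar>z::real\<bar> \<le> 1 + z^2"
proof (cases "\<bar>z\<bar> \<le> 1")
  case True thus ?thesis using zero_le_power2[of z] by linarith
next
  case False
  hence "\<bar>z\<bar> * 1 \<le> \<bar>z\<bar> * \<bar>z\<bar>" by (intro mult_left_mono) auto
  thus ?thesis by (simp add: power2_eq_square)
qed

locale mfam =
  fixes M :: "'a measure" and P :: "'a measure" and X Y :: "'a \<Rightarrow> real"
  assumes prob: "prob_space P" and seq: "sets P = sets M"
    and Xm: "X \<in> borel_measurable M" and Ym: "Y \<in> borel_measurable M"
    and X2: "integrable P (\<lambda>\<omega>. (X \<omega>)^2)" and Y2: "integrable P (\<lambda>\<omega>. (Y \<omega>)^2)"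
begin

lemma XmP: "X \<in> borel_measurable P" unfolding measurable_cong_sets[OF seq refl] by (rule Xm)
lemma YmP: "Y \<in> borel_measurable P" unfolding measurable_cong_sets[OF seq refl] by (rule Ym)

lemma intX: "integrable P X"
  by (rule finite_measure.square_integrable_imp_integrable[OF prob_space.finite_measure[OF prob] XmP X2])
lemma intY: "integrable P Y"
  by (rule finite_measure.square_integrable_imp_integrable[OF prob_space.finite_measure[OF prob] YmP Y2])
lemma intXY: "integrable P (\<lambda>\<omega>. X \<omega> * Y \<omega>)"
proof (rule Bochner_Integration.integrable_bound[of P "\<lambda>\<omega>. (X \<omega>)^2 + (Y \<omega>)^2"])
  show "integrable P (\<lambda>\<omega>. (X \<omega>)^2 + (Y \<omega>)^2)" using X2 Y2 by simp
  show "(\<lambda>\<omega>. X \<omega> * Y \<omega>) \<in> borel_measurable P" using XmP YmP by simp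
  show "AE \<omega> in P. norm (X \<omega> * Y \<omega>) \<le> norm ((X \<omega>)^2 + (Y \<omega>)^2)"
    using absprod_sq by simp
qed

lemma int_quad:
  "integral\<^sup>L P (\<lambda>\<omega>. p*(X \<omega>)^2 + q*(Y \<omega>)^2 + r*(X \<omega> * Y \<omega>) + s*X \<omega> + t*Y \<omega> + w)
   = p*integral\<^sup>L P (\<lambda>\<omega>. (X \<omega>)^2) + q*integral\<^sup>L P (\<lambda>\<omega>. (Y \<omega>)^2)
     + r*integral\<^sup>L P (\<lambda>\<omega>. X \<omega> * Y \<omega>) + s*integral\<^sup>L P X + t*integral\<^sup>L P Y + w"
proof -
  have i: "integrable P (\<lambda>\<omega>. p*(X \<omega>)^2)" "integrable P (\<lambda>\<omega>. q*(Y \<omega>)^2)"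
    "integrable P (\<lambda>\<omega>. r*(X \<omega> * Y \<omega>))" "integrable P (\<lambda>\<omega>. s*X \<omega>)" "integrable P (\<lambda>\<omega>. t*Y \<omega>)"
    "integrable P (\<lambda>\<omega>. w)"
    using X2 Y2 intXY intX intY finite_measure.integrable_const[OF prob_space.finite_measure[OF prob]] by auto
  have "integral\<^sup>L P (\<lambda>\<omega>. p*(X \<omega>)^2 + q*(Y \<omega>)^2 + r*(X \<omega> * Y \<omega>) + s*X \<omega> + t*Y \<omega> + w)
    = integral\<^sup>L P (\<lambda>\<omega>. p*(X \<omega>)^2) + integral\<^sup>L P (\<lambda>\<omega>. q*(Y \<omega>)^2)
     + integral\<^sup>L P (\<lambda>\<omega>. r*(X \<omega> * Y \<omega>)) + integral\<^sup>L P (\<lambda>\<omega>. s*X \<omega>) + integral\<^sup>L P (\<lambda>\<omega>. t*Y \<omega>)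
     + integral\<^sup>L P (\<lambda>\<omega>. w)"
    using i by (simp add: Bochner_Integration.integral_add)
  also have "\<dots> = p*integral\<^sup>L P (\<lambda>\<omega>. (X \<omega>)^2) + q*integral\<^sup>L P (\<lambda>\<omega>. (Y \<omega>)^2)
     + r*integral\<^sup>L P (\<lambda>\<omega>. X \<omega> * Y \<omega>) + s*integral\<^sup>L P X + t*integral\<^sup>L P Y + w"
    using prob_space.prob_space[OF prob] by simp
  finally show ?thesis .
qed

lemma int_nonneg_sq: "0 \<le> integral\<^sup>L P (\<lambda>\<omega>. (g \<omega>)^2)" for g :: "'a \<Rightarrow> real"
  by (rule integral_nonneg_AE) simp

end

context mfam
begin

lemma int_UV:
  "integral\<^sup>L P (\<lambda>\<omega>. ((X \<omega> + Y \<omega>)/2 - \<alpha>)^2 - ((X \<omega> - Y \<omega>)/2 - \<beta>)^2)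
   = integral\<^sup>L P (\<lambda>\<omega>. X \<omega> * Y \<omega>) - (\<alpha>-\<beta>)*integral\<^sup>L P X - (\<alpha>+\<beta>)*integral\<^sup>L P Y + (\<alpha>^2 - \<beta>^2)"
proof -
  have "(\<lambda>\<omega>. ((X \<omega> + Y \<omega>)/2 - \<alpha>)^2 - ((X \<omega> - Y \<omega>)/2 - \<beta>)^2)
     = (\<lambda>\<omega>. 0*(X \<omega>)^2 + 0*(Y \<omega>)^2 + 1*(X \<omega> * Y \<omega>) + (-(\<alpha>-\<beta>))*X \<omega> + (-(\<alpha>+\<beta>))*Y \<omega> + (\<alpha>^2 - \<beta>^2))"
    by (rule ext) (simp add: power2_eq_square field_simps)
  note eq = this
  show ?thesis unfolding eq int_quad by (simp add: algebra_simps)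
qed

lemma int_XY:
  "integral\<^sup>L P (\<lambda>\<omega>. (X \<omega> - m1) * (Y \<omega> - m2))
   = integral\<^sup>L P (\<lambda>\<omega>. X \<omega> * Y \<omega>) - m2*integral\<^sup>L P X - m1*integral\<^sup>L P Y + m1*m2"
proof -
  have "(\<lambda>\<omega>. (X \<omega> - m1) * (Y \<omega> - m2))
     = (\<lambda>\<omega>. 0*(X \<omega>)^2 + 0*(Y \<omega>)^2 + 1*(X \<omega> * Y \<omega>) + (-m2)*X \<omega> + (-m1)*Y \<omega> + m1*m2)"
    by (rule ext) (simp add: algebra_simps)
  note eq = this
  show ?thesis unfolding eq int_quad by simp
qed

lemma int_negX: "integral\<^sup>L P (\<lambda>\<omega>. - X \<omega>) = - integral\<^sup>L P X" by simp
lemma int_negY: "integral\<^sup>L P (\<lambda>\<omega>. - Y \<omega>) = - integral\<^sup>L P Y" by simp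

lemma mx_sq: "(integral\<^sup>L P X)^2 \<le> integral\<^sup>L P (\<lambda>\<omega>. (X \<omega>)^2)"
proof -
  define m where "m = integral\<^sup>L P X"
  have "(\<lambda>\<omega>. (X \<omega> - m)^2) = (\<lambda>\<omega>. 1*(X \<omega>)^2 + 0*(Y \<omega>)^2 + 0*(X \<omega> * Y \<omega>) + (-2*m)*X \<omega> + 0*Y \<omega> + m^2)"
    by (rule ext) (simp add: power2_eq_square algebra_simps)
  note eq = this
  have "integral\<^sup>L P (\<lambda>\<omega>. (X \<omega> - m)^2) = integral\<^sup>L P (\<lambda>\<omega>. (X \<omega>)^2) - m^2"
    unfolding eq int_quad by (simp add: m_def power2_eq_square)
  thus ?thesis using int_nonneg_sq[of "\<lambda>\<omega>. X \<omega> - m"] unfolding m_def by linarith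
qed

lemma my_sq: "(integral\<^sup>L P Y)^2 \<le> integral\<^sup>L P (\<lambda>\<omega>. (Y \<omega>)^2)"
proof -
  define m where "m = integral\<^sup>L P Y"
  have "(\<lambda>\<omega>. (Y \<omega> - m)^2) = (\<lambda>\<omega>. 0*(X \<omega>)^2 + 1*(Y \<omega>)^2 + 0*(X \<omega> * Y \<omega>) + 0*X \<omega> + (-2*m)*Y \<omega> + m^2)"
    by (rule ext) (simp add: power2_eq_square algebra_simps)
  note eq = this
  have "integral\<^sup>L P (\<lambda>\<omega>. (Y \<omega> - m)^2) = integral\<^sup>L P (\<lambda>\<omega>. (Y \<omega>)^2) - m^2"
    unfolding eq int_quad by (simp add: m_def power2_eq_square)
  thus ?thesis using int_nonneg_sq[of "\<lambda>\<omega>. Y \<omega> - m"] unfolding m_def by linarith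
qed

lemma mxy_pm:
  "0 \<le> integral\<^sup>L P (\<lambda>\<omega>. (X \<omega>)^2) + 2*integral\<^sup>L P (\<lambda>\<omega>. X \<omega> * Y \<omega>) + integral\<^sup>L P (\<lambda>\<omega>. (Y \<omega>)^2)"
  "0 \<le> integral\<^sup>L P (\<lambda>\<omega>. (X \<omega>)^2) - 2*integral\<^sup>L P (\<lambda>\<omega>. X \<omega> * Y \<omega>) + integral\<^sup>L P (\<lambda>\<omega>. (Y \<omega>)^2)"
proof -
  have "(\<lambda>\<omega>. (X \<omega> + Y \<omega>)^2) = (\<lambda>\<omega>. 1*(X \<omega>)^2 + 1*(Y \<omega>)^2 + 2*(X \<omega> * Y \<omega>) + 0*X \<omega> + 0*Y \<omega> + 0)"
    by (rule ext) (simp add: power2_eq_square algebra_simps)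
  note eq1 = this
  have "integral\<^sup>L P (\<lambda>\<omega>. (X \<omega> + Y \<omega>)^2) = integral\<^sup>L P (\<lambda>\<omega>. (X \<omega>)^2) + 2*integral\<^sup>L P (\<lambda>\<omega>. X \<omega> * Y \<omega>) + integral\<^sup>L P (\<lambda>\<omega>. (Y \<omega>)^2)"
    unfolding eq1 int_quad by simp
  thus "0 \<le> integral\<^sup>L P (\<lambda>\<omega>. (X \<omega>)^2) + 2*integral\<^sup>L P (\<lambda>\<omega>. X \<omega> * Y \<omega>) + integral\<^sup>L P (\<lambda>\<omega>. (Y \<omega>)^2)"
    using int_nonneg_sq[of "\<lambda>\<omega>. X \<omega> + Y \<omega>"] by linarith
  have "(\<lambda>\<omega>. (X \<omega> - Y \<omega>)^2) = (\<lambda>\<omega>. 1*(X \<omega>)^2 + 1*(Y \<omega>)^2 + (-2)*(X \<omega> * Y \<omega>) + 0*X \<omega> + 0*Y \<omega> + 0)"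
    by (rule ext) (simp add: power2_eq_square algebra_simps)
  note eq2 = this
  have "integral\<^sup>L P (\<lambda>\<omega>. (X \<omega> - Y \<omega>)^2) = integral\<^sup>L P (\<lambda>\<omega>. (X \<omega>)^2) - 2*integral\<^sup>L P (\<lambda>\<omega>. X \<omega> * Y \<omega>) + integral\<^sup>L P (\<lambda>\<omega>. (Y \<omega>)^2)"
    unfolding eq2 int_quad by simp
  thus "0 \<le> integral\<^sup>L P (\<lambda>\<omega>. (X \<omega>)^2) - 2*integral\<^sup>L P (\<lambda>\<omega>. X \<omega> * Y \<omega>) + integral\<^sup>L P (\<lambda>\<omega>. (Y \<omega>)^2)"
    using int_nonneg_sq[of "\<lambda>\<omega>. X \<omega> - Y \<omega>"] by linarith
qed

end

lemma Inf_as_Sup: "(INF i\<in>A. g i) = - (SUP i\<in>A. - g i)" for g :: "'b \<Rightarrow> real"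
  unfolding Inf_real_def image_image by simp

definition ma :: "('a \<Rightarrow> real) \<Rightarrow> ('a \<Rightarrow> real) \<Rightarrow> 'a measure \<Rightarrow> real"
  where "ma X Y = (\<lambda>P. (integral\<^sup>L P X + integral\<^sup>L P Y)/2)"
definition mb :: "('a \<Rightarrow> real) \<Rightarrow> ('a \<Rightarrow> real) \<Rightarrow> 'a measure \<Rightarrow> real"
  where "mb X Y = (\<lambda>P. (integral\<^sup>L P X - integral\<^sup>L P Y)/2)"
definition muu :: "('a \<Rightarrow> real) \<Rightarrow> ('a \<Rightarrow> real) \<Rightarrow> 'a measure \<Rightarrow> real"
  where "muu X Y = (\<lambda>P. (integral\<^sup>L P (\<lambda>\<omega>. (X \<omega>)^2) + 2*integral\<^sup>L P (\<lambda>\<omega>. X \<omega> * Y \<omega>) + integral\<^sup>L P (\<lambda>\<omega>. (Y \<omega>)^2))/4)"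
definition mvv :: "('a \<Rightarrow> real) \<Rightarrow> ('a \<Rightarrow> real) \<Rightarrow> 'a measure \<Rightarrow> real"
  where "mvv X Y = (\<lambda>P. (integral\<^sup>L P (\<lambda>\<omega>. (X \<omega>)^2) - 2*integral\<^sup>L P (\<lambda>\<omega>. X \<omega> * Y \<omega>) + integral\<^sup>L P (\<lambda>\<omega>. (Y \<omega>)^2))/4)"

lemma div4_le: "x \<le> 4 + 4*u1 + 4*u2 \<Longrightarrow> x/4 \<le> 1 + u1 + (u2::real)" by simp
lemma div4_ge: "0 \<le> x \<Longrightarrow> 0 \<le> (x::real)/4" by simp

lemma meas_init:
  fixes M :: "'a measure" and Ps :: "'a measure set" and X Y :: "'a \<Rightarrow> real"
  assumes Ps_ne: "Ps \<noteq> {}"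
    and Ps_prob': "\<forall>P\<in>Ps. prob_space P \<and> sets P = sets M"
    and X_meas: "X \<in> borel_measurable M" and Y_meas: "Y \<in> borel_measurable M"
    and X2_int': "\<forall>P\<in>Ps. integrable P (\<lambda>\<omega>. (X \<omega>)^2)"
    and Y2_int': "\<forall>P\<in>Ps. integrable P (\<lambda>\<omega>. (Y \<omega>)^2)"
    and X2_bdd: "bdd_above ((\<lambda>P. integral\<^sup>L P (\<lambda>\<omega>. (X \<omega>)^2)) ` Ps)"
    and Y2_bdd: "bdd_above ((\<lambda>P. integral\<^sup>L P (\<lambda>\<omega>. (Y \<omega>)^2)) ` Ps)"
  defines "a \<equiv> ma X Y" and "b \<equiv> mb X Y" and "uu \<equiv> muu X Y" and "vv \<equiv> mvv X Y"
  shows "\<exists>K. core Ps a b uu vv K"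
    and "\<And>\<alpha> \<beta>. Ehat Ps (\<lambda>\<omega>. ((X \<omega> + Y \<omega>)/2 - \<alpha>)^2 - ((X \<omega> - Y \<omega>)/2 - \<beta>)^2) = core.F Ps a b uu vv \<alpha> \<beta>"
    and "MW Ps X = {core.xl Ps a b .. core.xu Ps a b}"
    and "MW Ps Y = {core.yl Ps a b .. core.yu Ps a b}"
    and "upper_cov Ps X Y = (SUP m2\<in>{core.yl Ps a b..core.yu Ps a b}. INF m1\<in>{core.xl Ps a b..core.xu Ps a b}.
            core.F Ps a b uu vv ((m1+m2)/2) ((m1-m2)/2))"
proof -
  have Ps_prob: "\<And>P. P \<in> Ps \<Longrightarrow> prob_space P \<and> sets P = sets M" using Ps_prob' by blast
  have X2_int: "\<And>P. P \<in> Ps \<Longrightarrow> integrable P (\<lambda>\<omega>. (X \<omega>)^2)" using X2_int' by blast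
  have Y2_int: "\<And>P. P \<in> Ps \<Longrightarrow> integrable P (\<lambda>\<omega>. (Y \<omega>)^2)" using Y2_int' by blast
  have mf: "mfam M P X Y" if "P \<in> Ps" for P
  proof -
    have p1: "prob_space P" and p2: "sets P = sets M" using Ps_prob[OF that] by auto
    show ?thesis by (rule mfam.intro[OF p1 p2 X_meas Y_meas X2_int[OF that] Y2_int[OF that]])
  qed
  define SX where "SX = (SUP P\<in>Ps. integral\<^sup>L P (\<lambda>\<omega>. (X \<omega>)^2))"
  define SY where "SY = (SUP P\<in>Ps. integral\<^sup>L P (\<lambda>\<omega>. (Y \<omega>)^2))"
  have SXu: "integral\<^sup>L P (\<lambda>\<omega>. (X \<omega>)^2) \<le> SX" if "P \<in> Ps" for P
    unfolding SX_def by (rule cSUP_upper[OF that X2_bdd])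
  have SYu: "integral\<^sup>L P (\<lambda>\<omega>. (Y \<omega>)^2) \<le> SY" if "P \<in> Ps" for P
    unfolding SY_def by (rule cSUP_upper[OF that Y2_bdd])
  have nX: "0 \<le> integral\<^sup>L P (\<lambda>\<omega>. (X \<omega>)^2)" for P by (rule integral_nonneg_AE) simp
  have nY: "0 \<le> integral\<^sup>L P (\<lambda>\<omega>. (Y \<omega>)^2)" for P by (rule integral_nonneg_AE) simp
  obtain P0 where P0: "P0 \<in> Ps" using Ps_ne by blast
  have SX0: "0 \<le> SX" using SXu[OF P0] nX[of P0] by linarith
  have SY0: "0 \<le> SY" using SYu[OF P0] nY[of P0] by linarith
  define K where "K = 1 + SX + SY"
  have cI: "core Ps a b uu vv K"
  proof (rule core.intro)
    show "Ps \<noteq> {}" by (rule Ps_ne)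
  next
    fix P assume P: "P \<in> Ps"
    interpret mfam M P X Y by (rule mf[OF P])
    have mx: "\<bar>integral\<^sup>L P X\<bar> \<le> 1 + SX" using abs_le_1sq[of "integral\<^sup>L P X"] mx_sq SXu[OF P] by linarith
    have my: "\<bar>integral\<^sup>L P Y\<bar> \<le> 1 + SY" using abs_le_1sq[of "integral\<^sup>L P Y"] my_sq SYu[OF P] by linarith
    have m4: "integral\<^sup>L P X \<le> 1 + SX" "- integral\<^sup>L P X \<le> 1 + SX"
      "integral\<^sup>L P Y \<le> 1 + SY" "- integral\<^sup>L P Y \<le> 1 + SY"
      using mx my by (auto dest: abs_le_D1 abs_le_D2)
    show "\<bar>a P\<bar> \<le> K" unfolding abs_le_iff a_def ma_def K_def using m4 SX0 SY0 by (intro conjI; simp add: field_simps)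
    show "\<bar>b P\<bar> \<le> K" unfolding abs_le_iff b_def mb_def K_def using m4 SX0 SY0 by (intro conjI; simp add: field_simps)
    show "uu P \<le> K" unfolding uu_def muu_def K_def using mxy_pm SXu[OF P] SYu[OF P] SX0 SY0
      by (intro div4_le) linarith
    show "vv P \<le> K" unfolding vv_def mvv_def K_def using mxy_pm SXu[OF P] SYu[OF P] SX0 SY0
      by (intro div4_le) linarith
    show "0 \<le> uu P" unfolding uu_def muu_def using mxy_pm by (intro div4_ge) linarith
    show "0 \<le> vv P" unfolding vv_def mvv_def using mxy_pm by (intro div4_ge) linarith
  qed
  thus "\<exists>K. core Ps a b uu vv K" by blast
  show F_eq: "Ehat Ps (\<lambda>\<omega>. ((X \<omega> + Y \<omega>)/2 - \<alpha>)^2 - ((X \<omega> - Y \<omega>)/2 - \<beta>)^2) = core.F Ps a b uu vv \<alpha> \<beta>" for \<alpha> \<beta>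
    unfolding Ehat_def core.F_def[OF cI]
  proof (rule SUP_cong[OF refl])
    fix P assume P: "P \<in> Ps"
    interpret mfam M P X Y by (rule mf[OF P])
    show "integral\<^sup>L P (\<lambda>\<omega>. ((X \<omega> + Y \<omega>)/2 - \<alpha>)^2 - ((X \<omega> - Y \<omega>)/2 - \<beta>)^2) = core.f a b uu vv P \<alpha> \<beta>"
      unfolding int_UV core.f_def[OF cI] by (simp add: a_def ma_def b_def mb_def uu_def muu_def vv_def mvv_def field_simps power2_eq_square)
  qed
  show MX: "MW Ps X = {core.xl Ps a b .. core.xu Ps a b}"
  proof -
    have "mu_up Ps X = core.xu Ps a b" unfolding mu_up_def Ehat_def core.xu_def[OF cI] core.x_def[OF cI]
      by (rule SUP_cong[OF refl]) (simp add: a_def ma_def b_def mb_def field_simps)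
    moreover have "mu_low Ps X = core.xl Ps a b" unfolding mu_low_def Ehat_def core.xl_def[OF cI] core.x_def[OF cI] Inf_as_Sup
      by (simp add: a_def ma_def b_def mb_def field_simps)
    ultimately show ?thesis unfolding MW_def by simp
  qed
  show MY: "MW Ps Y = {core.yl Ps a b .. core.yu Ps a b}"
  proof -
    have "mu_up Ps Y = core.yu Ps a b" unfolding mu_up_def Ehat_def core.yu_def[OF cI] core.y_def[OF cI]
      by (rule SUP_cong[OF refl]) (simp add: a_def ma_def b_def mb_def field_simps)
    moreover have "mu_low Ps Y = core.yl Ps a b" unfolding mu_low_def Ehat_def core.yl_def[OF cI] core.y_def[OF cI] Inf_as_Sup
      by (simp add: a_def ma_def b_def mb_def field_simps)
    ultimately show ?thesis unfolding MW_def by simp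
  qed
  have cov_eq: "Ehat Ps (\<lambda>\<omega>. (X \<omega> - m1) * (Y \<omega> - m2)) = core.F Ps a b uu vv ((m1+m2)/2) ((m1-m2)/2)" for m1 m2
    unfolding Ehat_def core.F_def[OF cI]
  proof (rule SUP_cong[OF refl])
    fix P assume P: "P \<in> Ps"
    interpret mfam M P X Y by (rule mf[OF P])
    show "integral\<^sup>L P (\<lambda>\<omega>. (X \<omega> - m1) * (Y \<omega> - m2)) = core.f a b uu vv P ((m1+m2)/2) ((m1-m2)/2)"
      unfolding int_XY core.f_def[OF cI] by (simp add: a_def ma_def b_def mb_def uu_def muu_def vv_def mvv_def field_simps power2_eq_square)
  qed
  show "upper_cov Ps X Y = (SUP m2\<in>{core.yl Ps a b..core.yu Ps a b}. INF m1\<in>{core.xl Ps a b..core.xu Ps a b}.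
            core.F Ps a b uu vv ((m1+m2)/2) ((m1-m2)/2))"
    unfolding upper_cov_def MX MY cov_eq ..
qed

lemma Sup_as_Inf: "(SUP i\<in>A. - g i) = - (INF i\<in>A. g i)" for g :: "'b \<Rightarrow> real"
  unfolding Inf_as_Sup by simp

lemma INF_neg: "(INF i\<in>A. - g i) = - (SUP i\<in>A. g i)" for g :: "'b \<Rightarrow> real"
  unfolding Inf_as_Sup by simp

lemma MW_neg: "MW Ps (\<lambda>\<omega>. - Y \<omega>) = uminus ` MW Ps Y"
proof -
  have "mu_up Ps (\<lambda>\<omega>. - Y \<omega>) = - mu_low Ps Y" unfolding mu_up_def mu_low_def by simp
  moreover have "mu_low Ps (\<lambda>\<omega>. - Y \<omega>) = - mu_up Ps Y" unfolding mu_up_def mu_low_def by simp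
  ultimately show ?thesis unfolding MW_def by simp
qed

lemma lower_neg: "lower_cov Ps X Y = - upper_cov Ps X (\<lambda>\<omega>. - Y \<omega>)"
proof -
  have e: "(\<lambda>\<omega>. (X \<omega> - m1) * (- Y \<omega> - - m2)) = (\<lambda>\<omega>. - ((X \<omega> - m1) * (Y \<omega> - m2)))" for m1 m2 :: real
    by (rule ext) (simp add: algebra_simps)
  have "upper_cov Ps X (\<lambda>\<omega>. - Y \<omega>) = (SUP m2\<in>MW Ps Y. INF m1\<in>MW Ps X.
      Ehat Ps (\<lambda>\<omega>. - ((X \<omega> - m1) * (Y \<omega> - m2))))"
    unfolding upper_cov_def MW_neg image_image e ..
  moreover have "lower_cov Ps X Y = - (SUP m2\<in>MW Ps Y. INF m1\<in>MW Ps X.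
      Ehat Ps (\<lambda>\<omega>. - ((X \<omega> - m1) * (Y \<omega> - m2))))"
    unfolding lower_cov_def Sup_as_Inf INF_neg ..
  ultimately show ?thesis by simp
qed

theorem proposition3p12:
  fixes M :: "'a measure" and Ps :: "'a measure set" and X Y :: "'a \<Rightarrow> real"
  assumes Ps_ne: "Ps \<noteq> {}"
    and Ps_prob: "\<And>P. P \<in> Ps \<Longrightarrow> prob_space P \<and> sets P = sets M"
    and X_meas: "X \<in> borel_measurable M" and Y_meas: "Y \<in> borel_measurable M"
    and X2_int: "\<And>P. P \<in> Ps \<Longrightarrow> integrable P (\<lambda>\<omega>. (X \<omega>)^2)"
    and Y2_int: "\<And>P. P \<in> Ps \<Longrightarrow> integrable P (\<lambda>\<omega>. (Y \<omega>)^2)"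
    and X2_bdd: "bdd_above ((\<lambda>P. integral\<^sup>L P (\<lambda>\<omega>. (X \<omega>)^2)) ` Ps)"
    and Y2_bdd: "bdd_above ((\<lambda>P. integral\<^sup>L P (\<lambda>\<omega>. (Y \<omega>)^2)) ` Ps)"
  shows
    "let U = (\<lambda>\<omega>. (X \<omega> + Y \<omega>) / 2); V = (\<lambda>\<omega>. (X \<omega> - Y \<omega>) / 2);
         F = (\<lambda>\<alpha> \<beta>. Ehat Ps (\<lambda>\<omega>. (U \<omega> - \<alpha>)^2 - (V \<omega> - \<beta>)^2));
         G = (\<lambda>\<alpha> \<beta>. - Ehat Ps (\<lambda>\<omega>. - ((U \<omega> - \<alpha>)^2) + (V \<omega> - \<beta>)^2))
     in (\<forall>\<beta>. \<exists>\<alpha>0. \<forall>\<alpha>. F \<alpha>0 \<beta> \<le> F \<alpha> \<beta>)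
      \<and> (\<exists>\<beta>0. \<forall>\<beta>. (INF \<alpha>. F \<alpha> \<beta>) \<le> (INF \<alpha>. F \<alpha> \<beta>0))
      \<and> upper_cov Ps X Y = (SUP \<beta>. INF \<alpha>. F \<alpha> \<beta>)
      \<and> (\<forall>\<alpha>. \<exists>\<beta>0. \<forall>\<beta>. G \<alpha> \<beta> \<le> G \<alpha> \<beta>0)
      \<and> (\<exists>\<alpha>0. \<forall>\<alpha>. (SUP \<beta>. G \<alpha>0 \<beta>) \<le> (SUP \<beta>. G \<alpha> \<beta>))
      \<and> lower_cov Ps X Y = (INF \<alpha>. SUP \<beta>. G \<alpha> \<beta>)
      \<and> upper_cov Ps X X = upper_var Ps X
      \<and> lower_cov Ps X X = lower_var Ps X"
proof -
  define Yn where "Yn = (\<lambda>\<omega>. - Y \<omega>)"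
  define Xn where "Xn = (\<lambda>\<omega>. - X \<omega>)"
  have Yn_meas: "Yn \<in> borel_measurable M" unfolding Yn_def using Y_meas by simp
  have Xn_meas: "Xn \<in> borel_measurable M" unfolding Xn_def using X_meas by simp
  have Yn2_int: "\<And>P. P \<in> Ps \<Longrightarrow> integrable P (\<lambda>\<omega>. (Yn \<omega>)^2)" unfolding Yn_def using Y2_int by simp
  have Xn2_int: "\<And>P. P \<in> Ps \<Longrightarrow> integrable P (\<lambda>\<omega>. (Xn \<omega>)^2)" unfolding Xn_def using X2_int by simp
  have Yn2_bdd: "bdd_above ((\<lambda>P. integral\<^sup>L P (\<lambda>\<omega>. (Yn \<omega>)^2)) ` Ps)" unfolding Yn_def using Y2_bdd by simp
  have Xn2_bdd: "bdd_above ((\<lambda>P. integral\<^sup>L P (\<lambda>\<omega>. (Xn \<omega>)^2)) ` Ps)" unfolding Xn_def using X2_bdd by simp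
  have Ps_prob': "\<forall>P\<in>Ps. prob_space P \<and> sets P = sets M" using Ps_prob by blast
  have X2': "\<forall>P\<in>Ps. integrable P (\<lambda>\<omega>. (X \<omega>)^2)" using X2_int by blast
  have Y2': "\<forall>P\<in>Ps. integrable P (\<lambda>\<omega>. (Y \<omega>)^2)" using Y2_int by blast
  have Xn2': "\<forall>P\<in>Ps. integrable P (\<lambda>\<omega>. (Xn \<omega>)^2)" using Xn2_int by blast
  have Yn2': "\<forall>P\<in>Ps. integrable P (\<lambda>\<omega>. (Yn \<omega>)^2)" using Yn2_int by blast
  note S = meas_init[OF Ps_ne Ps_prob' X_meas Y_meas X2' Y2' X2_bdd Y2_bdd]
  note Sn = meas_init[OF Ps_ne Ps_prob' X_meas Yn_meas X2' Yn2' X2_bdd Yn2_bdd]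
  note SX = meas_init[OF Ps_ne Ps_prob' X_meas X_meas X2' X2' X2_bdd X2_bdd]
  note SXn = meas_init[OF Ps_ne Ps_prob' X_meas Xn_meas X2' Xn2' X2_bdd Xn2_bdd]
  obtain K1 where c1: "core Ps (ma X Y) (mb X Y) (muu X Y) (mvv X Y) K1" using S(1) by blast
  obtain K2 where c2: "core Ps (ma X Yn) (mb X Yn) (muu X Yn) (mvv X Yn) K2" using Sn(1) by blast
  obtain K3 where c3: "core Ps (ma X X) (mb X X) (muu X X) (mvv X X) K3" using SX(1) by blast
  obtain K4 where c4: "core Ps (ma X Xn) (mb X Xn) (muu X Xn) (mvv X Xn) K4" using SXn(1) by blast
  define F1 where "F1 = core.F Ps (ma X Y) (mb X Y) (muu X Y) (mvv X Y)"
  define F2 where "F2 = core.F Ps (ma X Yn) (mb X Yn) (muu X Yn) (mvv X Yn)"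
  define F3 where "F3 = core.F Ps (ma X X) (mb X X) (muu X X) (mvv X X)"
  define F4 where "F4 = core.F Ps (ma X Xn) (mb X Xn) (muu X Xn) (mvv X Xn)"
  have FF: "Ehat Ps (\<lambda>\<omega>. ((X \<omega> + Y \<omega>)/2 - \<alpha>)^2 - ((X \<omega> - Y \<omega>)/2 - \<beta>)^2) = F1 \<alpha> \<beta>" for \<alpha> \<beta>
    unfolding F1_def by (rule S(2))
  have GG: "Ehat Ps (\<lambda>\<omega>. - (((X \<omega> + Y \<omega>)/2 - \<alpha>)^2) + ((X \<omega> - Y \<omega>)/2 - \<beta>)^2) = F2 \<beta> \<alpha>" for \<alpha> \<beta>
  proof -
    have "(\<lambda>\<omega>. - (((X \<omega> + Y \<omega>)/2 - \<alpha>)^2) + ((X \<omega> - Y \<omega>)/2 - \<beta>)^2)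
        = (\<lambda>\<omega>. ((X \<omega> + Yn \<omega>)/2 - \<beta>)^2 - ((X \<omega> - Yn \<omega>)/2 - \<alpha>)^2)"
      unfolding Yn_def by (rule ext) (simp add: algebra_simps)
    thus ?thesis unfolding F2_def using Sn(2)[of \<beta> \<alpha>] by simp
  qed
  have cov1: "upper_cov Ps X Y = (SUP \<beta>. INF \<alpha>. F1 \<alpha> \<beta>)"
    unfolding S(5) F1_def by (rule core.claim3[OF c1])
  have cov2: "upper_cov Ps X Yn = (SUP \<beta>. INF \<alpha>. F2 \<alpha> \<beta>)"
    unfolding Sn(5) F2_def by (rule core.claim3[OF c2])
  have c1a: "\<forall>\<beta>. \<exists>\<alpha>0. \<forall>\<alpha>. F1 \<alpha>0 \<beta> \<le> F1 \<alpha> \<beta>" unfolding F1_def using core.claim1[OF c1] by blast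
  have c1b: "\<exists>\<beta>0. \<forall>\<beta>. (INF \<alpha>. F1 \<alpha> \<beta>) \<le> (INF \<alpha>. F1 \<alpha> \<beta>0)" unfolding F1_def using core.claim2[OF c1] by blast
  have c2a: "\<forall>\<alpha>. \<exists>\<beta>0. \<forall>\<beta>. - F2 \<beta> \<alpha> \<le> - F2 \<beta>0 \<alpha>"
    unfolding F2_def using core.claim1[OF c2] by (metis neg_le_iff_le)
  have SG: "(SUP \<beta>. - F2 \<beta> \<alpha>) = - (INF \<beta>. F2 \<beta> \<alpha>)" for \<alpha> by (rule Sup_as_Inf)
  have c2b: "\<exists>\<alpha>0. \<forall>\<alpha>. (SUP \<beta>. - F2 \<beta> \<alpha>0) \<le> (SUP \<beta>. - F2 \<beta> \<alpha>)"
    unfolding SG using core.claim2[OF c2] unfolding F2_def by (metis neg_le_iff_le)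
  have low: "lower_cov Ps X Y = (INF \<alpha>. SUP \<beta>. - F2 \<beta> \<alpha>)"
    unfolding SG INF_neg lower_neg cov2[unfolded Yn_def] by simp
  
  have bz: "mb X X P = 0 \<and> mvv X X P = 0" for P
    unfolding mb_def mvv_def by (simp add: power2_eq_square)
  have az: "ma X Xn P = 0 \<and> muu X Xn P = 0" for P
    unfolding ma_def muu_def Xn_def by (simp add: power2_eq_square)
  have uv: "upper_cov Ps X X = upper_var Ps X"
  proof -
    have "upper_cov Ps X X = (SUP \<beta>. INF \<alpha>. F3 \<alpha> \<beta>)"
      unfolding SX(5) F3_def by (rule core.claim3[OF c3])
    also have "\<dots> = (INF \<alpha>\<in>{core.xl Ps (ma X X) (mb X X)..core.xu Ps (ma X X) (mb X X)}. F3 \<alpha> 0)"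
      unfolding F3_def by (rule core.var_up[OF c3]) (use bz in auto)
    also have "\<dots> = upper_var Ps X"
    proof -
      have "Ehat Ps (\<lambda>\<omega>. (X \<omega> - \<mu>)^2) = F3 \<mu> 0" for \<mu>
      proof -
        have "(\<lambda>\<omega>. (X \<omega> - \<mu>)^2) = (\<lambda>\<omega>. ((X \<omega> + X \<omega>)/2 - \<mu>)^2 - ((X \<omega> - X \<omega>)/2 - 0)^2)"
          by (rule ext) simp
        thus ?thesis unfolding F3_def using SX(2)[of \<mu> 0] by simp
      qed
      thus ?thesis unfolding upper_var_def SX(3) by simp
    qed
    finally show ?thesis .
  qed
  have lv: "lower_cov Ps X X = lower_var Ps X"
  proof -
    have Xn_eq: "Xn = (\<lambda>\<omega>. - X \<omega>)" by (simp add: Xn_def)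
    have "lower_cov Ps X X = - upper_cov Ps X Xn" unfolding lower_neg Xn_eq ..
    also have "upper_cov Ps X Xn = (SUP \<beta>. INF \<alpha>. F4 \<alpha> \<beta>)"
      unfolding SXn(5) F4_def by (rule core.claim3[OF c4])
    also have "\<dots> = (SUP \<beta>\<in>{core.xl Ps (ma X Xn) (mb X Xn)..core.xu Ps (ma X Xn) (mb X Xn)}. F4 0 \<beta>)"
      unfolding F4_def by (rule core.var_low[OF c4]) (use az in auto)
    also have "- \<dots> = lower_var Ps X"
    proof -
      have "Ehat Ps (\<lambda>\<omega>. - ((X \<omega> - \<mu>)^2)) = F4 0 \<mu>" for \<mu>
      proof -
        have "(\<lambda>\<omega>. - ((X \<omega> - \<mu>)^2)) = (\<lambda>\<omega>. ((X \<omega> + Xn \<omega>)/2 - 0)^2 - ((X \<omega> - Xn \<omega>)/2 - \<mu>)^2)"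
          unfolding Xn_def by (rule ext) simp
        thus ?thesis unfolding F4_def using SXn(2)[of 0 \<mu>] by simp
      qed
      thus ?thesis unfolding lower_var_def SXn(3) INF_neg by simp
    qed
    finally show ?thesis .
  qed
  show ?thesis
    unfolding Let_def FF GG
    using c1a c1b cov1 c2a c2b low uv lv by blast
qed

end
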